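(* Let $u,u_h^{(2)},\tilde u,\tilde u_1,\tilde u_2$ be elements of $\bigcap_{i=1}^N\mathcal{D}(J_i)$. Suppose that, for each $i\in\{1,\dots,N\}$ and each $k\in\{1,2\}$, one has $|J_i(u)-J_i(u_h^{(2)})|<b_h|J_i(u)-J_i(\tilde u_k)|$, for some $b_h<b_0$ with a fixed $b_0\in(0,1)$. Suppose also that for all $i=1,\dots,N$, $$J_i(u_h^{(2)})\notin[\min\{J_i(\tilde u_1),J_i(\tilde u_2)\},\ \max\{J_i(\tilde u_1),J_i(\tilde u_2)\}].$$ Then: if $|J_i(u)-J_i(\tilde u_1)|\le|J_i(u)-J_i(\tilde u_2)|$ for all $i\in\{1,\dots,N\}$, it follows that $J_{\mathfrak{E}}(\tilde u_1)\le J_{\mathfrak{E}}(\tilde u_2)$.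
   Context: Let $U$ be a real Banach space. Let $J_1,\dots,J_N$ be real-valued functionals with domains $\mathcal{D}(J_i)\subseteq U$. In the application, $u$ is the exact solution of a nonlinear problem, $u_h^{(2)}$ is a discrete solution on an enriched finite element space, and $\tilde u$ is a fixed approximation. Write $\vec J(v):=(J_1(v),\dots,J_N(v))$, and for $x\in\mathbb{R}^N$ write $|x|_N:=(|x_1|,\dots,|x_N|)$. For $M\subseteq\mathbb{R}^N$, an error-weighting function is a map $\mathfrak{E}:(\mathbb{R}^+_0)^N\times M\to\mathbb{R}^+_0$ such that for every $m\in M$: - $\mathfrak{E}(\cdot,m)\in\mathcal{C}^1((\mathbb{R}^+_0)^N,\mathbb{R}^+_0)$; - $\mathfrak{E}(\cdot,m)$ is strictly monotonically increasing in each component; - $\mathfrak{E}(0,m)=0$. Fix such an $\mathfrak{E}$ with $\vec J(\tilde u)\in M$, and define $J_{\mathfrak{E}}(v):=\mathfrak{E}(|\vec J(u_h^{(2)})-\vec J(v)|_N,\vec J(\tilde u))$ for $v\in\bigcap_{i=1}^N\mathcal{D}(J_i)$. *)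

theory Defs
  imports "HOL-Analysis.Analysis"
begin

text \<open>The index set {1..N} is modelled by a finite type 'n; vectors in R^N are real^'n.\<close>

definition nonneg_orthant :: "(real^'n) set" where
  "nonneg_orthant = {x. \<forall>i. 0 \<le> x $ i}"

definition C1_on :: "(real^'n) set \<Rightarrow> (real^'n \<Rightarrow> real) \<Rightarrow> bool" where
  "C1_on S f \<longleftrightarrow> (\<exists>f' :: real^'n \<Rightarrow> ((real^'n) \<Rightarrow>\<^sub>L real).
      (\<forall>x\<in>S. (f has_derivative blinfun_apply (f' x)) (at x within S)) \<and> continuous_on S f')"

definition strictly_mono_components :: "(real^'n) set \<Rightarrow> (real^'n \<Rightarrow> real) \<Rightarrow> bool" where
  "strictly_mono_components S f \<longleftrightarrow>
     (\<forall>x\<in>S. \<forall>y\<in>S. \<forall>i. x $ i < y $ i \<and> (\<forall>j. j \<noteq> i \<longrightarrow> x $ j = y $ j) \<longrightarrow> f x < f y)"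

text \<open>Error-weighting function E : (R_0^+)^N x M -> R_0^+ (values outside the domain irrelevant).\<close>
definition error_weighting :: "(real^'n \<Rightarrow> real^'n \<Rightarrow> real) \<Rightarrow> (real^'n) set \<Rightarrow> bool" where
  "error_weighting E M \<longleftrightarrow>
     (\<forall>m\<in>M. (\<forall>x\<in>nonneg_orthant. 0 \<le> E x m)
        \<and> C1_on nonneg_orthant (\<lambda>x. E x m)
        \<and> strictly_mono_components nonneg_orthant (\<lambda>x. E x m)
        \<and> E 0 m = 0)"

definition Jvec :: "('n \<Rightarrow> 'u \<Rightarrow> real) \<Rightarrow> 'u \<Rightarrow> real^'n" where
  "Jvec J v = (\<chi> i. J i v)"

definition absN :: "real^'n \<Rightarrow> real^'n" where
  "absN x = (\<chi> i. \<bar>x $ i\<bar>)"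

definition J_E :: "(real^'n \<Rightarrow> real^'n \<Rightarrow> real) \<Rightarrow> ('n \<Rightarrow> 'u \<Rightarrow> real) \<Rightarrow> 'u \<Rightarrow> 'u \<Rightarrow> 'u \<Rightarrow> real" where
  "J_E E J uh2 ut v = E (absN (Jvec J uh2 - Jvec J v)) (Jvec J ut)"

end

theory Submission
  imports Defs
begin

lemma mono_aux:
  fixes f :: "real^'n::finite \<Rightarrow> real"
  assumes sm: "strictly_mono_components nonneg_orthant f"
    and x: "x \<in> nonneg_orthant" and le: "\<forall>i. x $ i \<le> y $ i"
  shows "finite S \<Longrightarrow> f x \<le> f (\<chi> i. if i \<in> S then y $ i else x $ i)"
proof (induction S rule: finite_induct)
  case empty
  then show ?case by simp
next
  case (insert k S)
  let ?a = "(\<chi> i. if i \<in> S then y $ i else x $ i) :: real^'n"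
  let ?b = "(\<chi> i. if i \<in> insert k S then y $ i else x $ i) :: real^'n"
  have ina: "?a \<in> nonneg_orthant" "?b \<in> nonneg_orthant" using x le
    unfolding nonneg_orthant_def by (auto intro: order_trans)
  have "f ?a \<le> f ?b"
  proof (cases "x $ k = y $ k")
    case True
    then have "?a = ?b" using insert by (auto simp: vec_eq_iff)
    then show ?thesis by simp
  next
    case False
    then have "?a $ k < ?b $ k" using insert le by (simp add: order_less_le)
    moreover have "\<forall>j. j \<noteq> k \<longrightarrow> ?a $ j = ?b $ j" by simp
    ultimately show ?thesis using sm ina unfolding strictly_mono_components_def
      by (meson less_imp_le)
  qed
  then show ?case using insert by linarith
qed

lemma mono_E:
  fixes f :: "real^'n::finite \<Rightarrow> real"
  assumes sm: "strictly_mono_components nonneg_orthant f"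
    and x: "x \<in> nonneg_orthant" and le: "\<forall>i. x $ i \<le> y $ i"
  shows "f x \<le> f y"
proof -
  have "f x \<le> f (\<chi> i. if i \<in> UNIV then y $ i else x $ i)"
    using mono_aux[OF assms, of UNIV] by simp
  also have "(\<chi> i. if i \<in> UNIV then y $ i else x $ i) = y" by (simp add: vec_eq_iff)
  finally show ?thesis .
qed

lemma comp_aux:
  fixes a h x1 x2 bh :: real
  assumes "bh < 1" "\<bar>a - h\<bar> < bh * \<bar>a - x1\<bar>" "\<bar>a - h\<bar> < bh * \<bar>a - x2\<bar>"
    and "h \<notin> {min x1 x2 .. max x1 x2}" and "\<bar>a - x1\<bar> \<le> \<bar>a - x2\<bar>"
  shows "\<bar>h - x1\<bar> \<le> \<bar>h - x2\<bar>"
proof -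
  have bp: "bh > 0" using assms(2) by (smt (verit) mult_nonpos_nonneg abs_ge_zero)
  have c1: "\<bar>a - h\<bar> < \<bar>a - x1\<bar>" using assms(1,2) bp
    by (smt (verit) mult_left_le_one_le abs_ge_zero)
  have c2: "\<bar>a - h\<bar> < \<bar>a - x2\<bar>" using assms(1,3) bp
    by (smt (verit) mult_left_le_one_le abs_ge_zero)
  show ?thesis using c1 c2 assms(4,5) by (auto simp: abs_if split: if_splits)
qed

theorem mainTheorem4:
  fixes J :: "'n::finite \<Rightarrow> 'u::banach \<Rightarrow> real"
    and D :: "'n \<Rightarrow> 'u set"
    and E :: "real^'n \<Rightarrow> real^'n \<Rightarrow> real"
    and M :: "(real^'n) set"
    and u uh2 ut ut1 ut2 :: 'u
    and bh b0 :: real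
  assumes "error_weighting E M"
    and "Jvec J ut \<in> M"
    and "u \<in> (\<Inter>i. D i)" "uh2 \<in> (\<Inter>i. D i)" "ut \<in> (\<Inter>i. D i)"
        "ut1 \<in> (\<Inter>i. D i)" "ut2 \<in> (\<Inter>i. D i)"
    and "0 < b0" "b0 < 1" "bh < b0"
    and "\<forall>i. \<forall>w\<in>{ut1, ut2}. \<bar>J i u - J i uh2\<bar> < bh * \<bar>J i u - J i w\<bar>"
    and "\<forall>i. J i uh2 \<notin> {min (J i ut1) (J i ut2) .. max (J i ut1) (J i ut2)}"
    and "\<forall>i. \<bar>J i u - J i ut1\<bar> \<le> \<bar>J i u - J i ut2\<bar>"
  shows "J_E E J uh2 ut ut1 \<le> J_E E J uh2 ut ut2"
proof -
  have sm: "strictly_mono_components nonneg_orthant (\<lambda>x. E x (Jvec J ut))"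
    using assms(1,2) unfolding error_weighting_def by blast
  have le: "\<forall>i. absN (Jvec J uh2 - Jvec J ut1) $ i \<le> absN (Jvec J uh2 - Jvec J ut2) $ i"
  proof
    fix i
    have "\<bar>J i uh2 - J i ut1\<bar> \<le> \<bar>J i uh2 - J i ut2\<bar>"
      apply (rule comp_aux[where a="J i u" and bh=bh])
      using assms(9-13) by auto
    then show "absN (Jvec J uh2 - Jvec J ut1) $ i \<le> absN (Jvec J uh2 - Jvec J ut2) $ i"
      by (simp add: absN_def Jvec_def)
  qed
  have "absN (Jvec J uh2 - Jvec J ut1) \<in> nonneg_orthant"
    by (simp add: absN_def nonneg_orthant_def)
  from mono_E[OF sm this le] show ?thesis by (simp add: J_E_def)
qed

end
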